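(* Fix $b\in(0,1)$ and $0\le\rho\le1$ (with $\rho<1$), and let $\tau:=\rho(1-\rho)^{-1}(1-b)^{-1}$. Consider HL-PushTASEP on $\mathbb{Z}_{\geq 0}$ in which, in addition, particles enter the system through site $0$ at the times of an independent Poisson process of rate $\tau$ (an entering particle arrives at site $0$ and then proceeds as an activated particle under the HL-PushTASEP rules). Then the product Bernoulli measure $\nu_\rho$, under which the occupation variables $\{\eta(x)\}_{x\in\mathbb{Z}_{\geq0}}$ are independent $\mathrm{Ber}(\rho)$ random variables, is invariant for this dynamics: if the process starts from $\nu_\rho$, then at every time $t\ge0$ the occupation variables $\{\eta_t(x)\}_{x\in\mathbb{Z}_{\ge0}}$ are i.i.d. $\mathrm{Ber}(\rho)$.
   Context: HL-PushTASEP on $\mathbb{Z}_{\geq 0}$ with parameter $b\in(0,1)$: particles occupy sites of $\mathbb{Z}_{\geq 0}$, at most one per site, each with an independent rate-$1$ exponential clock. An activated particle moves one step to the right and then continues step by step with probability $b$ per further step (i.e., the particle at $x_m$ jumps $j$ steps with probability $(1-b)b^{j-1}$ for $1\leq j<x_{m+1}-x_m$); with probability $b^{x_{m+1}-x_m-1}$ it reaches the site $x_{m+1}$ of its right neighbour, stops there, and the particle previously at $x_{m+1}$ is instantaneously activated and moves by the same rule. $\eta_t(x)=1$ if site $x$ is occupied at time $t$ and $0$ otherwise. *)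

theory Defs
  imports "HOL-Probability.Probability"
begin

text \<open>HL-PushTASEP on the nonnegative integers with boundary entry through site 0,
observed on the window of sites {0..n}.  Since all motion is to the right, the
configuration on {0..n} is itself a finite-state continuous-time Markov chain
(particles that jump beyond n simply leave the window).  Configurations on the
window are represented by the set of occupied sites, a subset of {..n}.\<close>

text \<open>fly n b S q: a particle in flight arrives at site q (its previous step brought
it there), in configuration S (the flying particle not counted in S).  If q is occupied, it stops at q and the particle at
q is activated, its first (mandatory) step bringing it to q+1.  If q is empty, it
stops at q with probability 1-b and continues to q+1 with probability b.\<close>

function fly :: "nat \<Rightarrow> real \<Rightarrow> nat set \<Rightarrow> nat \<Rightarrow> nat set pmf" where
  "fly n b S q =
     (if n < q then return_pmf S
      else if q \<in> S then fly n b S (Suc q)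
      else bind_pmf (bernoulli_pmf b)
             (\<lambda>c. if c then fly n b S (Suc q) else return_pmf (insert q S)))"
  by auto
termination
  by (relation "Wellfounded.measure (\<lambda>(n, b, S, q). Suc n - q)") auto

text \<open>Generator of the window chain: each particle at x (rate 1) is activated, leaves x
and makes its first step to x+1; particles enter at rate tau as a particle whose
first step brings it to site 0.\<close>

definition gen :: "nat \<Rightarrow> real \<Rightarrow> real \<Rightarrow> nat set \<Rightarrow> nat set \<Rightarrow> real" where
  "gen n b tau S T =
     (\<Sum>x\<in>S. pmf (fly n b (S - {x}) (Suc x)) T - (if T = S then 1 else 0))
     + tau * (pmf (fly n b S 0) T - (if T = S then 1 else 0))"

fun matpow :: "nat \<Rightarrow> (nat set \<Rightarrow> nat set \<Rightarrow> real) \<Rightarrow> nat \<Rightarrow> nat set \<Rightarrow> nat set \<Rightarrow> real" where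
  "matpow n Q 0 S T = (if S = T then 1 else 0)"
| "matpow n Q (Suc k) S T = (\<Sum>U\<in>Pow {..n}. matpow n Q k S U * Q U T)"

definition window_semigroup :: "nat \<Rightarrow> real \<Rightarrow> real \<Rightarrow> real \<Rightarrow> nat set \<Rightarrow> nat set \<Rightarrow> real" where
  "window_semigroup n b tau t S T = (\<Sum>k. t ^ k / fact k * matpow n (gen n b tau) k S T)"

definition bern :: "nat \<Rightarrow> real \<Rightarrow> nat set \<Rightarrow> real" where
  "bern n rho S = rho ^ card S * (1 - rho) ^ (Suc n - card S)"

end

theory Submission
  imports Defs
begin

declare fly.simps[simp del]

lemma fly_pmf:
  assumes b: "0 < b" "b < 1"
  shows "pmf (fly n b R q) T = (if T = R then b ^ card ({q..<Suc n} - R) else 0)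
     + (\<Sum>y\<in>{q..<Suc n}. if y \<notin> R \<and> T = insert y R then (1-b) * b ^ card ({q..<y} - R) else 0)"
  using b
proof (induction n b R q rule: fly.induct)
  case (1 n b S q)
  show ?case
  proof (cases "n < q")
    case True then show ?thesis by (subst fly.simps) (simp add: pmf_return indicator_def)
  next
    case False
    have spl: "{q..<Suc n} = insert q {Suc q..<Suc n}" using False by auto
    show ?thesis
    proof (cases "q \<in> S")
      case True
      have e1: "{q..<Suc n} - S = {Suc q..<Suc n} - S" using True by (auto simp: spl)
      have e2: "\<And>y. {q..<y} - S = {Suc q..<y} - S" using True by (auto, metis Suc_leI le_neq_implies_less)
      have "pmf (fly n b S q) T = pmf (fly n b S (Suc q)) T" by (subst fly.simps) (use False True in simp)
      also have "\<dots> = (if T = S then b ^ card ({Suc q..<Suc n} - S) else 0)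
     + (\<Sum>y\<in>{Suc q..<Suc n}. if y \<notin> S \<and> T = insert y S then (1-b) * b ^ card ({Suc q..<y} - S) else 0)"
        by (rule "1.IH"(1)[OF False True "1.prems"])
      also have "\<dots> = (if T = S then b ^ card ({q..<Suc n} - S) else 0)
     + (\<Sum>y\<in>{q..<Suc n}. if y \<notin> S \<and> T = insert y S then (1-b) * b ^ card ({q..<y} - S) else 0)"
        unfolding e1 e2 spl using True by (simp del: fly.simps)
      finally show ?thesis .
    next
      case qS: False
      have T: "True \<in> set_pmf (bernoulli_pmf b)" using "1.prems" by (simp add: set_pmf_bernoulli)
      have IH: "pmf (fly n b S (Suc q)) T = (if T = S then b ^ card ({Suc q..<Suc n} - S) else 0)
     + (\<Sum>y\<in>{Suc q..<Suc n}. if y \<notin> S \<and> T = insert y S then (1-b) * b ^ card ({Suc q..<y} - S) else 0)"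
        by (rule "1.IH"(2)[OF False qS T _ "1.prems"]) simp
      have e1: "{q..<Suc n} - S = insert q ({Suc q..<Suc n} - S)" using qS spl by auto
      have e2: "\<And>y. q < y \<Longrightarrow> {q..<y} - S = insert q ({Suc q..<y} - S)" using qS by auto
      have ne: "T = insert q S \<Longrightarrow> T \<noteq> S" using qS by auto
      have "pmf (fly n b S q) T = b * pmf (fly n b S (Suc q)) T + (1-b) * (if T = insert q S then 1 else 0)"
        using "1.prems" False qS by (subst fly.simps) (simp add: pmf_bind pmf_return indicator_def)
      also have "\<dots> = (if T = S then b ^ card ({q..<Suc n} - S) else 0)
     + (\<Sum>y\<in>{q..<Suc n}. if y \<notin> S \<and> T = insert y S then (1-b) * b ^ card ({q..<y} - S) else 0)"
      proof -
        have "(\<Sum>y\<in>{q..<Suc n}. if y \<notin> S \<and> T = insert y S then (1-b) * b ^ card ({q..<y} - S) else 0)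
          = (if T = insert q S then (1-b) else 0) + b * (\<Sum>y\<in>{Suc q..<Suc n}. if y \<notin> S \<and> T = insert y S then (1-b) * b ^ card ({Suc q..<y} - S) else 0)"
        proof -
          have c: "\<And>y. y \<in> {Suc q..<Suc n} \<Longrightarrow> card ({q..<y} - S) = Suc (card ({Suc q..<y} - S))"
            using e2 by simp
          have "(\<Sum>y\<in>{q..<Suc n}. if y \<notin> S \<and> T = insert y S then (1-b) * b ^ card ({q..<y} - S) else 0)
            = (if T = insert q S then (1-b) else 0) + (\<Sum>y\<in>{Suc q..<Suc n}. if y \<notin> S \<and> T = insert y S then (1-b) * b ^ card ({q..<y} - S) else 0)"
            unfolding spl using qS by (subst sum.insert) auto
          also have "(\<Sum>y\<in>{Suc q..<Suc n}. if y \<notin> S \<and> T = insert y S then (1-b) * b ^ card ({q..<y} - S) else 0)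
             = (\<Sum>y\<in>{Suc q..<Suc n}. b * (if y \<notin> S \<and> T = insert y S then (1-b) * b ^ card ({Suc q..<y} - S) else 0))"
            by (rule sum.cong) (auto simp: c)
          finally show ?thesis by (simp only: sum_distrib_left)
        qed
        moreover have "finite ({Suc q..<Suc n} - S)" by auto
        ultimately show ?thesis unfolding IH using qS ne by (auto simp: e1 algebra_simps)
      qed
      finally show ?thesis .
    qed
  qed
qed
lemma geo_id:
  fixes b :: real
  shows "(\<Sum>x<m. if x \<notin> T then (1-b)*b^card({Suc x..<m}-T) else 0) + b^card({0..<m}-T) = 1"
proof (induction m)
  case 0 then show ?case by simp
next
  case (Suc m)
  show ?case
  proof (cases "m \<in> T")
    case True
    have e: "\<And>a. {a..<Suc m} - T = {a..<m} - T" using True by (auto simp: less_Suc_eq)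
    have "(\<Sum>x<Suc m. if x \<notin> T then (1-b)*b^card({Suc x..<Suc m}-T) else 0)
        = (\<Sum>x<m. if x \<notin> T then (1-b)*b^card({Suc x..<m}-T) else 0)"
      using True by (simp only: sum.lessThan_Suc e) simp
    thus ?thesis using Suc e[of 0] by simp
  next
    case False
    have e: "\<And>a. a \<le> m \<Longrightarrow> {a..<Suc m} - T = insert m ({a..<m} - T)" using False by (auto simp: less_Suc_eq)
    have c: "\<And>a. a \<le> m \<Longrightarrow> card ({a..<Suc m} - T) = Suc (card ({a..<m} - T))"
      by (simp add: e)
    have "(\<Sum>x<Suc m. if x \<notin> T then (1-b)*b^card({Suc x..<Suc m}-T) else 0)
       = (\<Sum>x<m. b * (if x \<notin> T then (1-b)*b^card({Suc x..<m}-T) else 0)) + (1-b)"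
    proof -
      have "(\<Sum>x<m. if x \<notin> T then (1-b)*b^card({Suc x..<Suc m}-T) else 0)
        = (\<Sum>x<m. b * (if x \<notin> T then (1-b)*b^card({Suc x..<m}-T) else 0))"
        by (rule sum.cong) (auto simp: c)
      thus ?thesis using False by simp
    qed
    also have "\<dots> = b * (\<Sum>x<m. (if x \<notin> T then (1-b)*b^card({Suc x..<m}-T) else 0)) + (1-b)"
      by (simp only: sum_distrib_left)
    finally have X: "(\<Sum>x<Suc m. if x \<notin> T then (1-b)*b^card({Suc x..<Suc m}-T) else 0)
       = b * (\<Sum>x<m. (if x \<notin> T then (1-b)*b^card({Suc x..<m}-T) else 0)) + (1-b)" .
    have Y: "b^card({0..<Suc m}-T) = b * b^card({0..<m}-T)" using c[of 0] by simp
    have Z: "b * (\<Sum>x<m. (if x \<notin> T then (1-b)*b^card({Suc x..<m}-T) else 0)) + b * b^card({0..<m}-T) = b"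
      using arg_cong[OF Suc.IH, of "(*) b"] by (simp only: distrib_left mult_1_right)
    show ?thesis unfolding X Y using Z by linarith
  qed
qed

lemma bern_insert:
  assumes "x \<le> n" "x \<notin> T" "T \<subseteq> {..n}" "rho < 1"
  shows "bern n rho (insert x T) = rho / (1 - rho) * bern n rho T"
proof -
  have f: "finite T" using assms(3) finite_subset by blast
  have "card (insert x T) \<le> card {..n}" using assms by (intro card_mono) auto
  hence le: "Suc (card T) \<le> Suc n" using f assms(2) by simp
  hence "Suc n - card T = Suc (Suc n - Suc (card T))" by simp
  thus ?thesis unfolding bern_def using f assms(2,4) by (simp add: field_simps)
qed

lemma bern_swap:
  assumes "y \<in> T" "x \<notin> T" "T \<subseteq> {..n}"
  shows "bern n rho (insert x (T - {y})) = bern n rho T"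
proof -
  have f: "finite T" using assms(3) finite_subset by blast
  have "card (insert x (T - {y})) = card T" using f assms
    by (simp add: card_Diff_singleton) (metis One_nat_def Suc_pred card_gt_0_iff empty_iff)
  thus ?thesis unfolding bern_def by simp
qed
lemma diff_ins_eq: "{a..<y} - (T - {y}) = {a..<(y::nat)} - T" by auto

lemma act_x:
  assumes b: "0 < b" "b < 1" and rho: "rho < 1" and T: "T \<subseteq> {..n}" and x: "x \<le> n"
  shows "(\<Sum>S\<in>Pow {..n}. if x \<in> S then bern n rho S * pmf (fly n b (S-{x}) (Suc x)) T else 0)
    = (if x \<notin> T then rho / (1 - rho) * bern n rho T * b ^ card ({Suc x..<Suc n} - T) else 0)
      + bern n rho T * (\<Sum>y\<le>n. if x < y \<and> y \<in> T \<and> x \<notin> T then (1-b) * b ^ card ({Suc x..<y} - T) else 0)"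
proof -
  define P where "P = Pow {..n}"
  have finP: "finite P" unfolding P_def by simp
  let ?I1 = "\<lambda>S. if T = S - {x} then b ^ card ({Suc x..<Suc n} - (S - {x})) else 0"
  let ?I2 = "\<lambda>S. (\<Sum>y\<in>{Suc x..<Suc n}. if y \<notin> S - {x} \<and> T = insert y (S - {x}) then (1-b) * b ^ card ({Suc x..<y} - (S - {x})) else 0)"
  have "(\<Sum>S\<in>P. if x \<in> S then bern n rho S * pmf (fly n b (S-{x}) (Suc x)) T else 0)
      = (\<Sum>S\<in>P. (if x \<in> S then bern n rho S * ?I1 S else 0) + (if x \<in> S then bern n rho S * ?I2 S else 0))"
  proof (rule sum.cong[OF refl])
    fix S assume "S \<in> P"
    show "(if x \<in> S then bern n rho S * pmf (fly n b (S-{x}) (Suc x)) T else 0) = (if x \<in> S then bern n rho S * ?I1 S else 0) + (if x \<in> S then bern n rho S * ?I2 S else 0)"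
      by (cases "x \<in> S") (simp_all only: fly_pmf[OF b] if_True if_False distrib_left add_0)
  qed
  also have "\<dots> = (\<Sum>S\<in>P. if x \<in> S then bern n rho S * ?I1 S else 0) + (\<Sum>S\<in>P. if x \<in> S then bern n rho S * ?I2 S else 0)"
    by (rule sum.distrib)
  also have "(\<Sum>S\<in>P. if x \<in> S then bern n rho S * ?I1 S else 0)
     = (\<Sum>S\<in>P. if S = insert x T then (if x \<notin> T then bern n rho (insert x T) * b ^ card ({Suc x..<Suc n} - T) else 0) else 0)"
    by (rule sum.cong) auto
  also have "\<dots> = (if x \<notin> T then bern n rho (insert x T) * b ^ card ({Suc x..<Suc n} - T) else 0)"
    using finP T x by (subst sum.delta) (auto simp: P_def)
  also have "\<dots> = (if x \<notin> T then rho / (1 - rho) * bern n rho T * b ^ card ({Suc x..<Suc n} - T) else 0)"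
    using bern_insert[OF x _ T rho] by simp
  also have "(\<Sum>S\<in>P. if x \<in> S then bern n rho S * ?I2 S else 0)
     = (\<Sum>S\<in>P. \<Sum>y\<in>{Suc x..<Suc n}. if S = insert x (T - {y}) then (if y \<in> T \<and> x \<notin> T then bern n rho (insert x (T - {y})) * ((1-b) * b ^ card ({Suc x..<y} - T)) else 0) else 0)"
  proof (rule sum.cong[OF refl])
    fix S assume "S \<in> P"
    show "(if x \<in> S then bern n rho S * ?I2 S else 0) = (\<Sum>y\<in>{Suc x..<Suc n}. if S = insert x (T - {y}) then (if y \<in> T \<and> x \<notin> T then bern n rho (insert x (T - {y})) * ((1-b) * b ^ card ({Suc x..<y} - T)) else 0) else 0)"
    proof (cases "x \<in> S")
      case True
      show ?thesis unfolding if_P[OF True] sum_distrib_left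
      proof (rule sum.cong[OF refl])
        fix y assume y: "y \<in> {Suc x..<Suc n}"
        have iff: "(y \<notin> S - {x} \<and> T = insert y (S - {x})) \<longleftrightarrow> (S = insert x (T - {y}) \<and> y \<in> T \<and> x \<notin> T)"
          using True y by auto
        show "bern n rho S * (if y \<notin> S - {x} \<and> T = insert y (S - {x}) then (1-b) * b ^ card ({Suc x..<y} - (S - {x})) else 0)
          = (if S = insert x (T - {y}) then (if y \<in> T \<and> x \<notin> T then bern n rho (insert x (T - {y})) * ((1-b) * b ^ card ({Suc x..<y} - T)) else 0) else 0)"
        proof (cases "S = insert x (T - {y}) \<and> y \<in> T \<and> x \<notin> T")
          case True2: True
          hence "S - {x} = T - {y}" by auto
          thus ?thesis using True2 iff by (simp add: diff_ins_eq)
        next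
          case False
          thus ?thesis using iff by auto
        qed
      qed
    next
      case False
      have "\<And>y. S \<noteq> insert x (T - {y})" using False by auto
      thus ?thesis using False by (simp del: sum.op_ivl_Suc)
    qed
  qed
  also have "\<dots> = (\<Sum>y\<in>{Suc x..<Suc n}. \<Sum>S\<in>P. if S = insert x (T - {y}) then (if y \<in> T \<and> x \<notin> T then bern n rho (insert x (T - {y})) * ((1-b) * b ^ card ({Suc x..<y} - T)) else 0) else 0)"
    by (rule sum.swap)
  also have "\<dots> = (\<Sum>y\<in>{Suc x..<Suc n}. if y \<in> T \<and> x \<notin> T then bern n rho T * ((1-b) * b ^ card ({Suc x..<y} - T)) else 0)"
  proof (rule sum.cong[OF refl])
    fix y assume "y \<in> {Suc x..<Suc n}"
    have "insert x (T - {y}) \<in> P" using T x unfolding P_def by auto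
    thus "(\<Sum>S\<in>P. if S = insert x (T - {y}) then (if y \<in> T \<and> x \<notin> T then bern n rho (insert x (T - {y})) * ((1-b) * b ^ card ({Suc x..<y} - T)) else 0) else 0)
      = (if y \<in> T \<and> x \<notin> T then bern n rho T * ((1-b) * b ^ card ({Suc x..<y} - T)) else 0)"
      using finP bern_swap[of y T x n rho] T by (subst sum.delta) auto
  qed
  also have "\<dots> = (\<Sum>y\<le>n. if x < y then (if y \<in> T \<and> x \<notin> T then bern n rho T * ((1-b) * b ^ card ({Suc x..<y} - T)) else 0) else 0)"
  proof -
    have "{Suc x..<Suc n} = {..n} \<inter> {y. x < y}" by auto
    thus ?thesis by (simp only: sum.inter_restrict[OF finite_atMost]) simp
  qed
  also have "\<dots> = bern n rho T * (\<Sum>y\<le>n. if x < y \<and> y \<in> T \<and> x \<notin> T then (1-b) * b ^ card ({Suc x..<y} - T) else 0)"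
    unfolding sum_distrib_left by (rule sum.cong) auto
  finally show ?thesis unfolding P_def .
qed
lemma entry:
  assumes b: "0 < b" "b < 1" and T: "T \<subseteq> {..n}"
  shows "(\<Sum>S\<in>Pow {..n}. bern n rho S * pmf (fly n b S 0) T)
    = bern n rho T * b ^ card ({0..<Suc n} - T)
      + (\<Sum>y\<le>n. if y \<in> T then bern n rho (T - {y}) * ((1-b) * b ^ card ({0..<y} - T)) else 0)"
proof -
  define P where "P = Pow {..n}"
  have finP: "finite P" unfolding P_def by simp
  have "(\<Sum>S\<in>P. bern n rho S * pmf (fly n b S 0) T)
     = (\<Sum>S\<in>P. (if S = T then bern n rho T * b ^ card ({0..<Suc n} - T) else 0)
        + (\<Sum>y\<le>n. if S = T - {y} then (if y \<in> T then bern n rho (T - {y}) * ((1-b) * b ^ card ({0..<y} - T)) else 0) else 0))"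
  proof (rule sum.cong[OF refl])
    fix S assume "S \<in> P"
    have e: "{0..<Suc n} = {..n}" by auto
    have I2: "bern n rho S * (\<Sum>y\<in>{0..<Suc n}. if y \<notin> S \<and> T = insert y S then (1-b) * b ^ card ({0..<y} - S) else 0)
      = (\<Sum>y\<le>n. if S = T - {y} then (if y \<in> T then bern n rho (T - {y}) * ((1-b) * b ^ card ({0..<y} - T)) else 0) else 0)"
      unfolding sum_distrib_left e
    proof (rule sum.cong[OF refl])
      fix y
      have iff: "(y \<notin> S \<and> T = insert y S) \<longleftrightarrow> (S = T - {y} \<and> y \<in> T)" by auto
      show "bern n rho S * (if y \<notin> S \<and> T = insert y S then (1-b) * b ^ card ({0..<y} - S) else 0)
        = (if S = T - {y} then (if y \<in> T then bern n rho (T - {y}) * ((1-b) * b ^ card ({0..<y} - T)) else 0) else 0)"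
        using iff by (auto simp: diff_ins_eq)
    qed
    show "bern n rho S * pmf (fly n b S 0) T = (if S = T then bern n rho T * b ^ card ({0..<Suc n} - T) else 0)
        + (\<Sum>y\<le>n. if S = T - {y} then (if y \<in> T then bern n rho (T - {y}) * ((1-b) * b ^ card ({0..<y} - T)) else 0) else 0)"
    proof -
      have "bern n rho S * (if T = S then b ^ card ({0..<Suc n} - S) else 0) = (if S = T then bern n rho T * b ^ card ({0..<Suc n} - T) else 0)"
        by auto
      with I2 show ?thesis by (simp only: fly_pmf[OF b] distrib_left)
    qed
  qed
  also have "\<dots> = bern n rho T * b ^ card ({0..<Suc n} - T)
      + (\<Sum>y\<le>n. if y \<in> T then bern n rho (T - {y}) * ((1-b) * b ^ card ({0..<y} - T)) else 0)"
    unfolding sum.distrib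
  proof (rule arg_cong2[where f="(+)"])
    show "(\<Sum>S\<in>P. if S = T then bern n rho T * b ^ card ({0..<Suc n} - T) else 0) = bern n rho T * b ^ card ({0..<Suc n} - T)"
      using finP T by (subst sum.delta) (auto simp: P_def)
    show "(\<Sum>S\<in>P. \<Sum>y\<le>n. if S = T - {y} then (if y \<in> T then bern n rho (T - {y}) * ((1-b) * b ^ card ({0..<y} - T)) else 0) else 0)
      = (\<Sum>y\<le>n. if y \<in> T then bern n rho (T - {y}) * ((1-b) * b ^ card ({0..<y} - T)) else 0)"
      apply (subst sum.swap)
      apply (rule sum.cong[OF refl])
      using finP T by (subst sum.delta) (auto simp: P_def)
  qed
  finally show ?thesis unfolding P_def .
qed

lemma act:
  assumes b: "0 < b" "b < 1" and rho: "rho < 1" and T: "T \<subseteq> {..n}"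
  shows "(\<Sum>S\<in>Pow {..n}. bern n rho S * (\<Sum>x\<in>S. pmf (fly n b (S-{x}) (Suc x)) T))
    = rho / (1 - rho) * bern n rho T * (\<Sum>x\<le>n. if x \<notin> T then b ^ card ({Suc x..<Suc n} - T) else 0)
      + bern n rho T * (\<Sum>y\<le>n. if y \<in> T then (\<Sum>x<y. if x \<notin> T then (1-b) * b ^ card ({Suc x..<y} - T) else 0) else 0)"
proof -
  have "(\<Sum>S\<in>Pow {..n}. bern n rho S * (\<Sum>x\<in>S. pmf (fly n b (S-{x}) (Suc x)) T))
     = (\<Sum>S\<in>Pow {..n}. \<Sum>x\<le>n. if x \<in> S then bern n rho S * pmf (fly n b (S-{x}) (Suc x)) T else 0)"
  proof (rule sum.cong[OF refl])
    fix S assume "S \<in> Pow {..n}"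
    hence SS: "{..n} \<inter> S = S" by auto
    have X: "(\<Sum>x\<in>S. pmf (fly n b (S-{x}) (Suc x)) T) = (\<Sum>x\<le>n. if x \<in> S then pmf (fly n b (S-{x}) (Suc x)) T else 0)"
      using sum.inter_restrict[OF finite_atMost, of "\<lambda>x. pmf (fly n b (S-{x}) (Suc x)) T" n S] unfolding SS .
    show "bern n rho S * (\<Sum>x\<in>S. pmf (fly n b (S-{x}) (Suc x)) T) = (\<Sum>x\<le>n. if x \<in> S then bern n rho S * pmf (fly n b (S-{x}) (Suc x)) T else 0)"
      unfolding X sum_distrib_left by (rule sum.cong[OF refl]) simp
  qed
  also have "\<dots> = (\<Sum>x\<le>n. \<Sum>S\<in>Pow {..n}. if x \<in> S then bern n rho S * pmf (fly n b (S-{x}) (Suc x)) T else 0)"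
    by (rule sum.swap)
  also have "\<dots> = (\<Sum>x\<le>n. (if x \<notin> T then rho / (1 - rho) * bern n rho T * b ^ card ({Suc x..<Suc n} - T) else 0)
      + bern n rho T * (\<Sum>y\<le>n. if x < y \<and> y \<in> T \<and> x \<notin> T then (1-b) * b ^ card ({Suc x..<y} - T) else 0))"
    by (rule sum.cong[OF refl]) (rule act_x[OF b rho T], simp)
  also have "\<dots> = rho / (1 - rho) * bern n rho T * (\<Sum>x\<le>n. if x \<notin> T then b ^ card ({Suc x..<Suc n} - T) else 0)
      + bern n rho T * (\<Sum>x\<le>n. \<Sum>y\<le>n. if x < y \<and> y \<in> T \<and> x \<notin> T then (1-b) * b ^ card ({Suc x..<y} - T) else 0)"
    unfolding sum.distrib
  proof (rule arg_cong2[where f="(+)"])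
    show "(\<Sum>x\<le>n. if x \<notin> T then rho / (1 - rho) * bern n rho T * b ^ card ({Suc x..<Suc n} - T) else 0)
      = rho / (1 - rho) * bern n rho T * (\<Sum>x\<le>n. if x \<notin> T then b ^ card ({Suc x..<Suc n} - T) else 0)"
      unfolding sum_distrib_left by (rule sum.cong[OF refl]) simp
  qed (simp only: sum_distrib_left)
  also have "(\<Sum>x\<le>n. \<Sum>y\<le>n. if x < y \<and> y \<in> T \<and> x \<notin> T then (1-b) * b ^ card ({Suc x..<y} - T) else 0)
     = (\<Sum>y\<le>n. if y \<in> T then (\<Sum>x<y. if x \<notin> T then (1-b) * b ^ card ({Suc x..<y} - T) else 0) else 0)"
  proof -
    have "(\<Sum>x\<le>n. \<Sum>y\<le>n. if x < y \<and> y \<in> T \<and> x \<notin> T then (1-b) * b ^ card ({Suc x..<y} - T) else 0)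
      = (\<Sum>y\<le>n. \<Sum>x\<le>n. if x < y \<and> y \<in> T \<and> x \<notin> T then (1-b) * b ^ card ({Suc x..<y} - T) else 0)"
      by (rule sum.swap)
    also have "\<dots> = (\<Sum>y\<le>n. if y \<in> T then (\<Sum>x<y. if x \<notin> T then (1-b) * b ^ card ({Suc x..<y} - T) else 0) else 0)"
    proof (rule sum.cong[OF refl])
      fix y assume y: "y \<in> {..n}"
      have "{..<y} = {..n} \<inter> {x. x < y}" using y by auto
      hence H: "(\<Sum>x<y. if x \<notin> T then (1-b) * b ^ card ({Suc x..<y} - T) else 0)
        = (\<Sum>x\<le>n. if x < y then (if x \<notin> T then (1-b) * b ^ card ({Suc x..<y} - T) else 0) else 0)"
        by (simp only: sum.inter_restrict[OF finite_atMost] mem_Collect_eq)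
      thus "(\<Sum>x\<le>n. if x < y \<and> y \<in> T \<and> x \<notin> T then (1-b) * b ^ card ({Suc x..<y} - T) else 0)
        = (if y \<in> T then (\<Sum>x<y. if x \<notin> T then (1-b) * b ^ card ({Suc x..<y} - T) else 0) else 0)"
      proof (cases "y \<in> T")
        case True
        show ?thesis unfolding H if_P[OF True] using True by (intro sum.cong[OF refl]) simp
      next
        case False
        show ?thesis using False by (simp del: sum.op_ivl_Suc)
      qed
    qed
    finally show ?thesis .
  qed
  finally show ?thesis .
qed
lemma stationary:
  assumes b: "0 < b" "b < 1" and rho: "0 \<le> rho" "rho < 1"
    and tau: "tau = rho / ((1 - rho) * (1 - b))" and T: "T \<subseteq> {..n}"
  shows "(\<Sum>S\<in>Pow {..n}. bern n rho S * gen n b tau S T) = 0"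
proof -
  define r where "r = rho / (1 - rho)"
  define BT where "BT = bern n rho T"
  define e where "e = card ({0..<Suc n} - T)"
  define S1 where "S1 = (\<Sum>x\<le>n. if x \<notin> T then b ^ card ({Suc x..<Suc n} - T) else 0)"
  define D where "D = (\<Sum>y\<le>n. if y \<in> T then (\<Sum>x<y. if x \<notin> T then (1-b) * b ^ card ({Suc x..<y} - T) else 0) else 0)"
  define W where "W = (\<Sum>y\<le>n. if y \<in> T then b ^ card ({0..<y} - T) else (0::real))"
  have finP: "finite (Pow {..n})" by simp
  have tr: "tau * (1 - b) = r"
  proof -
    have "tau * (1 - b) = (rho * (1 - b)) / ((1 - rho) * (1 - b))" unfolding tau by simp
    also have "\<dots> = rho / (1 - rho)" using b by (intro nonzero_mult_divide_mult_cancel_right) simp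
    finally show ?thesis unfolding r_def .
  qed
  have TP: "T \<in> Pow {..n}" using T by simp
  have fT: "finite T" using T finite_subset by blast
  have pw: "bern n rho S * gen n b tau S T = bern n rho S * (\<Sum>x\<in>S. pmf (fly n b (S-{x}) (Suc x)) T)
      - (if S = T then BT * card T else 0) + tau * (bern n rho S * pmf (fly n b S 0) T)
      - tau * (if S = T then BT else 0)" for S
    unfolding gen_def BT_def sum_subtractf by (cases "S = T") (simp_all add: algebra_simps)
  have TW: "tau * (\<Sum>y\<le>n. if y \<in> T then bern n rho (T - {y}) * ((1-b) * b ^ card ({0..<y} - T)) else 0) = BT * W"
    unfolding W_def sum_distrib_left
  proof (rule sum.cong[OF refl])
    fix y assume y: "y \<in> {..n}"
    show "tau * (if y \<in> T then bern n rho (T - {y}) * ((1-b) * b ^ card ({0..<y} - T)) else 0)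
      = BT * (if y \<in> T then b ^ card ({0..<y} - T) else 0)"
    proof (cases "y \<in> T")
      case True
      have "BT = r * bern n rho (T - {y})"
        using bern_insert[of y n "T - {y}" rho] y T rho True unfolding BT_def r_def
        by (auto simp: insert_absorb)
      moreover note tr
      ultimately show ?thesis using True
      proof -
        assume h1: "BT = r * bern n rho (T - {y})" and h2: "tau * (1 - b) = r"
        have "tau * (bern n rho (T - {y}) * ((1-b) * b ^ card ({0..<y} - T)))
          = (tau * (1 - b)) * bern n rho (T - {y}) * b ^ card ({0..<y} - T)" by (simp add: mult_ac)
        also have "\<dots> = BT * b ^ card ({0..<y} - T)" unfolding h2 h1 by simp
        finally show ?thesis using True by simp
      qed
    qed simp
  qed
  have DW: "D + W = card T"
  proof -
    have "D + W = (\<Sum>y\<le>n. if y \<in> T then 1 else 0)"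
      unfolding D_def W_def sum.distrib[symmetric]
      by (rule sum.cong[OF refl]) (simp add: geo_id[where b=b and T=T])
    also have "\<dots> = card ({..n} \<inter> T)" by (simp add: sum.inter_restrict[symmetric])
    also have "{..n} \<inter> T = T" using T by auto
    finally show ?thesis .
  qed
  have RS: "r * S1 = tau - tau * b ^ e"
  proof -
    have h: "(1 - b) * S1 + b ^ e = 1"
      using geo_id[where b=b and m="Suc n" and T=T] unfolding S1_def e_def sum_distrib_left lessThan_Suc_atMost
      by (simp add: if_distrib cong: if_cong)
    have "r * S1 = tau * ((1 - b) * S1)" unfolding tr[symmetric] by (simp add: mult.assoc)
    also have "(1 - b) * S1 = 1 - b ^ e" using h by linarith
    finally show ?thesis by (simp add: algebra_simps)
  qed
  have "(\<Sum>S\<in>Pow {..n}. bern n rho S * gen n b tau S T)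
     = (\<Sum>S\<in>Pow {..n}. bern n rho S * (\<Sum>x\<in>S. pmf (fly n b (S-{x}) (Suc x)) T))
       - (\<Sum>S\<in>Pow {..n}. if S = T then BT * card T else 0)
       + tau * (\<Sum>S\<in>Pow {..n}. bern n rho S * pmf (fly n b S 0) T)
       - tau * (\<Sum>S\<in>Pow {..n}. if S = T then BT else 0)"
    unfolding pw sum.distrib sum_subtractf sum_distrib_left by simp
  also have "\<dots> = r * BT * S1 + BT * D - BT * card T + tau * (BT * b ^ e
      + (\<Sum>y\<le>n. if y \<in> T then bern n rho (T - {y}) * ((1-b) * b ^ card ({0..<y} - T)) else 0)) - tau * BT"
    using act[OF b rho(2) T] entry[OF b T, of rho] finP TP
    unfolding r_def BT_def S1_def D_def e_def by (simp add: sum.delta)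
  also have "\<dots> = r * BT * S1 + BT * D - BT * card T + (tau * (BT * b ^ e) + BT * W) - tau * BT"
    by (simp only: distrib_left TW)
  also have "r * BT * S1 + BT * D - BT * card T + (tau * (BT * b ^ e) + BT * W) - tau * BT
      = BT * (r * S1) + BT * (D + W) - BT * card T + tau * BT * b ^ e - tau * BT"
    by (simp add: algebra_simps)
  also have "\<dots> = 0" unfolding DW RS by (simp add: algebra_simps)
  finally show ?thesis .
qed
lemma matpow_stat:
  assumes H: "\<forall>T\<in>Pow {..n}. (\<Sum>S\<in>Pow {..n}. v S * Q S T) = 0"
  shows "T \<in> Pow {..n} \<Longrightarrow> (\<Sum>S\<in>Pow {..n}. v S * matpow n Q k S T) = (if k = 0 then v T else 0)"
proof (induction k arbitrary: T)
  case 0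
  have "(\<Sum>S\<in>Pow {..n}. v S * matpow n Q 0 S T) = (\<Sum>S\<in>Pow {..n}. if S = T then v S else 0)"
    by (rule sum.cong) auto
  also have "\<dots> = v T" using 0 by (subst sum.delta) auto
  finally show ?case by simp
next
  case (Suc k)
  have "(\<Sum>S\<in>Pow {..n}. v S * matpow n Q (Suc k) S T)
     = (\<Sum>S\<in>Pow {..n}. \<Sum>U\<in>Pow {..n}. v S * matpow n Q k S U * Q U T)"
    by (simp add: sum_distrib_left mult.assoc)
  also have "\<dots> = (\<Sum>U\<in>Pow {..n}. (\<Sum>S\<in>Pow {..n}. v S * matpow n Q k S U) * Q U T)"
    by (subst sum.swap) (simp add: sum_distrib_right)
  also have "\<dots> = (\<Sum>U\<in>Pow {..n}. (if k = 0 then v U else 0) * Q U T)"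
    by (rule sum.cong[OF refl]) (simp only: Suc.IH)
  also have "\<dots> = 0" using H Suc.prems by (cases "k = 0") auto
  finally show ?case by simp
qed

lemma matpow_bound:
  assumes "T \<in> Pow {..n}"
  shows "\<bar>matpow n Q k S T\<bar> \<le> (\<Sum>U\<in>Pow {..n}. \<Sum>V\<in>Pow {..n}. \<bar>Q U V\<bar>) ^ k"
  using assms
proof (induction k arbitrary: T)
  case 0
  then show ?case by simp
next
  case (Suc k)
  define K where "K = (\<Sum>U\<in>Pow {..n}. \<Sum>V\<in>Pow {..n}. \<bar>Q U V\<bar>)"
  have "\<bar>matpow n Q (Suc k) S T\<bar> \<le> (\<Sum>U\<in>Pow {..n}. \<bar>matpow n Q k S U\<bar> * \<bar>Q U T\<bar>)"
    by (simp add: abs_mult[symmetric] sum_abs del: matpow.simps(1))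
  also have "\<dots> \<le> (\<Sum>U\<in>Pow {..n}. K ^ k * \<bar>Q U T\<bar>)"
    by (rule sum_mono, rule mult_right_mono) (use Suc.IH in \<open>auto simp: K_def\<close>)
  also have "\<dots> = K ^ k * (\<Sum>U\<in>Pow {..n}. \<bar>Q U T\<bar>)" by (simp add: sum_distrib_left)
  also have "(\<Sum>U\<in>Pow {..n}. \<bar>Q U T\<bar>) \<le> K"
    unfolding K_def by (rule sum_mono, rule member_le_sum) (use Suc.prems in auto)
  hence "K ^ k * (\<Sum>U\<in>Pow {..n}. \<bar>Q U T\<bar>) \<le> K ^ k * K"
    by (rule mult_left_mono) (simp add: K_def sum_nonneg)
  finally show ?case by (simp add: K_def mult.commute)
qed

lemma matpow_summable:
  assumes "T \<in> Pow {..n}"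
  shows "summable (\<lambda>k. t ^ k / fact k * matpow n Q k S T)"
proof -
  define K where "K = (\<Sum>U\<in>Pow {..n}. \<Sum>V\<in>Pow {..n}. \<bar>Q U V\<bar>)"
  have "summable (\<lambda>k. (\<bar>t\<bar> * K) ^ k /\<^sub>R fact k)" by (rule summable_exp_generic)
  hence s: "summable (\<lambda>k. (\<bar>t\<bar> * K) ^ k / fact k)" by (simp add: divide_inverse mult.commute)
  show ?thesis
  proof (rule summable_comparison_test'[OF s])
    fix k :: nat
    have "norm (t ^ k / fact k * matpow n Q k S T) = \<bar>t\<bar> ^ k / fact k * \<bar>matpow n Q k S T\<bar>"
      by (simp add: abs_mult power_abs)
    also have "\<dots> \<le> \<bar>t\<bar> ^ k / fact k * K ^ k"
      by (rule mult_left_mono) (use matpow_bound[OF assms] in \<open>simp_all add: K_def\<close>)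
    also have "\<dots> = (\<bar>t\<bar> * K) ^ k / fact k" by (simp add: power_mult_distrib)
    finally show "norm (t ^ k / fact k * matpow n Q k S T) \<le> (\<bar>t\<bar> * K) ^ k / fact k" .
  qed
qed

theorem lemma2p13:
  fixes b rho tau :: real
  assumes "0 < b" and "b < 1"
    and "0 \<le> rho" and "rho < 1"
    and "tau = rho / ((1 - rho) * (1 - b))"
  shows "\<forall>n t T. 0 \<le> t \<longrightarrow> T \<subseteq> {..n} \<longrightarrow>
           (\<Sum>S\<in>Pow {..n}. bern n rho S * window_semigroup n b tau t S T) = bern n rho T"
proof (intro allI impI)
  fix n :: nat and t :: real and T :: "nat set"
  assume t: "0 \<le> t" and T: "T \<subseteq> {..n}"
  let ?Q = "gen n b tau"
  have H: "\<forall>T\<in>Pow {..n}. (\<Sum>S\<in>Pow {..n}. bern n rho S * ?Q S T) = 0"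
    using stationary[OF assms] by auto
  have TP: "T \<in> Pow {..n}" using T by simp
  have "(\<Sum>S\<in>Pow {..n}. bern n rho S * window_semigroup n b tau t S T)
      = (\<Sum>S\<in>Pow {..n}. \<Sum>k. bern n rho S * (t ^ k / fact k * matpow n ?Q k S T))"
    unfolding window_semigroup_def
    by (rule sum.cong[OF refl]) (rule suminf_mult[symmetric], rule matpow_summable[OF TP])
  also have "\<dots> = (\<Sum>k. \<Sum>S\<in>Pow {..n}. bern n rho S * (t ^ k / fact k * matpow n ?Q k S T))"
    by (rule suminf_sum[symmetric]) (rule summable_mult, rule matpow_summable[OF TP])
  also have "\<dots> = (\<Sum>k. if k = 0 then bern n rho T else 0)"
  proof (rule suminf_cong)
    fix k
    have "(\<Sum>S\<in>Pow {..n}. bern n rho S * (t ^ k / fact k * matpow n ?Q k S T))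
      = t ^ k / fact k * (\<Sum>S\<in>Pow {..n}. bern n rho S * matpow n ?Q k S T)"
      by (simp add: sum_distrib_left mult_ac)
    also have "\<dots> = t ^ k / fact k * (if k = 0 then bern n rho T else 0)"
      by (simp only: matpow_stat[OF H TP])
    finally show "(\<Sum>S\<in>Pow {..n}. bern n rho S * (t ^ k / fact k * matpow n ?Q k S T)) = (if k = 0 then bern n rho T else 0)"
      by simp
  qed
  also have "\<dots> = bern n rho T"
    using sums_single[of 0 "\<lambda>_. bern n rho T"] by (simp add: sums_iff)
  finally show "(\<Sum>S\<in>Pow {..n}. bern n rho S * window_semigroup n b tau t S T) = bern n rho T" .
qed

end
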